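(* Let $G=(V,E)$ be an undirected graph and let $\mathcal{F}$ be a $(\kappa,t)$-packing of $G$. Then the induced packing graph $H=G_{\mathcal{F}}$ satisfies $$\frac{|E(H)|}{|V(H)|}\le 2(t+1)^2\kappa^2\,\nabla_t(G)+\kappa.$$
   Context: A graph $K$ is $t$-shallow if there is a vertex $h$ such that every vertex of $K$ is joined to $h$ by a path in $K$ with at most $t$ edges. A $(\kappa,t)$-packing of $G$ is a multiset $\mathcal{F}$ of subsets $C\subseteq V$ such that each induced subgraph $G[C]$ is $t$-shallow and every vertex of $V$ lies in at most $\kappa$ members of $\mathcal{F}$ (counted with multiplicity). The induced packing graph $G_{\mathcal{F}}$ has vertex set $\mathcal{F}$, with $C,C'\in\mathcal{F}$ adjacent if $C\cap C'\neq\emptyset$ or there are $u\in C$, $v\in C'$ with $uv\in E$. A $t$-shallow minor of $G$ is a graph obtained by contracting edges and deleting edges and vertices such that each vertex of the minor corresponds to a cluster of vertices of $G$ inducing a $t$-shallow subgraph; $\nabla_t(G)$ is the supremum of $|E(K)|/|V(K)|$ over all $t$-shallow minors $K$ of $G$. *)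

theory Defs
  imports Complex_Main
begin

definition graph :: "'a set \<Rightarrow> 'a set set \<Rightarrow> bool" where
  "graph V E \<longleftrightarrow> finite V \<and>
     (\<forall>e\<in>E. \<exists>u v. e = {u, v} \<and> u \<noteq> v \<and> u \<in> V \<and> v \<in> V)"

definition induced_edges :: "'a set set \<Rightarrow> 'a set \<Rightarrow> 'a set set" where
  "induced_edges E C = {e \<in> E. e \<subseteq> C}"

definition is_walk :: "'a set \<Rightarrow> 'a set set \<Rightarrow> 'a list \<Rightarrow> bool" where
  "is_walk V E p \<longleftrightarrow> p \<noteq> [] \<and> set p \<subseteq> V \<and>
     (\<forall>i. Suc i < length p \<longrightarrow> {p ! i, p ! Suc i} \<in> E)"

text \<open>K = (V,E) is t-shallow: some vertex h reaches every vertex by a path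
  in K with at most t edges (i.e. at most t+1 vertices).\<close>
definition t_shallow :: "'a set \<Rightarrow> 'a set set \<Rightarrow> nat \<Rightarrow> bool" where
  "t_shallow V E t \<longleftrightarrow> (\<exists>h\<in>V. \<forall>v\<in>V. \<exists>p. is_walk V E p \<and> hd p = h \<and> last p = v
                                   \<and> length p \<le> t + 1)"

text \<open>A (kappa,t)-packing. The multiset F is represented as a list Fs
  (members counted with multiplicity, positions = copies).\<close>
definition packing :: "'a set \<Rightarrow> 'a set set \<Rightarrow> nat \<Rightarrow> nat \<Rightarrow> 'a set list \<Rightarrow> bool" where
  "packing V E \<kappa> t Fs \<longleftrightarrow>
     (\<forall>C\<in>set Fs. C \<subseteq> V \<and> t_shallow C (induced_edges E C) t) \<and>
     (\<forall>v\<in>V. length (filter (\<lambda>C. v \<in> C) Fs) \<le> \<kappa>)"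

text \<open>Induced packing graph: vertex set = the positions 0..<length Fs
  (the members of F with multiplicity), edges between distinct members.\<close>
definition packing_graph_vertices :: "'a set list \<Rightarrow> nat set" where
  "packing_graph_vertices Fs = {0..<length Fs}"

definition packing_graph_edges :: "'a set set \<Rightarrow> 'a set list \<Rightarrow> nat set set" where
  "packing_graph_edges E Fs =
     {{i, j} | i j. i < length Fs \<and> j < length Fs \<and> i \<noteq> j \<and>
        (Fs ! i \<inter> Fs ! j \<noteq> {} \<or> (\<exists>u\<in>Fs ! i. \<exists>v\<in>Fs ! j. {u, v} \<in> E))}"

text \<open>K = (VK,EK) is a t-shallow minor of G = (V,E): there are pairwise
  disjoint branch sets phi x (x in VK), each inducing a t-shallow subgraph of G,
  such that every edge xy of K is realised by an edge of G between phi x and phi y.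
  (Minor vertices are labelled by natural numbers, which loses nothing.)\<close>
definition shallow_minor :: "'a set \<Rightarrow> 'a set set \<Rightarrow> nat \<Rightarrow> nat set \<Rightarrow> nat set set \<Rightarrow> bool" where
  "shallow_minor V E t VK EK \<longleftrightarrow> graph VK EK \<and>
     (\<exists>\<phi> :: nat \<Rightarrow> 'a set.
        (\<forall>x\<in>VK. \<phi> x \<subseteq> V \<and> t_shallow (\<phi> x) (induced_edges E (\<phi> x)) t) \<and>
        (\<forall>x\<in>VK. \<forall>y\<in>VK. x \<noteq> y \<longrightarrow> \<phi> x \<inter> \<phi> y = {}) \<and>
        (\<forall>x\<in>VK. \<forall>y\<in>VK. {x, y} \<in> EK \<longrightarrow> (\<exists>u\<in>\<phi> x. \<exists>v\<in>\<phi> y. {u, v} \<in> E)))"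

text \<open>nabla_t(G) = sup of |E(K)|/|V(K)| over t-shallow minors K
  (the empty minor contributes 0/0 = 0 in HOL).\<close>
definition nabla :: "'a set \<Rightarrow> 'a set set \<Rightarrow> nat \<Rightarrow> real" where
  "nabla V E t = Sup {real (card EK) / real (card VK) | VK EK. shallow_minor V E t VK EK}"

end

theory Submission
  imports Defs "HOL-Combinatorics.Permutations"
begin


lemma class_count:
  fixes X :: "(nat \<Rightarrow> nat) set" and U :: "nat set"
  assumes fX: "finite X" and fU: "finite U" and aU: "a \<in> U"
    and inj: "\<And>\<pi>. \<pi> \<in> X \<Longrightarrow> inj_on \<pi> U"
    and clos: "\<And>\<pi> b. \<pi> \<in> X \<Longrightarrow> b \<in> U \<Longrightarrow> \<pi> \<circ> Transposition.transpose a b \<in> X"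
  shows "card {\<pi>\<in>X. \<forall>k\<in>U. \<pi> k \<le> \<pi> a} * card U = card X"
proof -
  define C where "C b = {\<pi>\<in>X. \<forall>k\<in>U. \<pi> k \<le> \<pi> b}" for b
  have cover: "X = (\<Union>b\<in>U. C b)"
  proof
    show "X \<subseteq> (\<Union>b\<in>U. C b)"
    proof
      fix \<pi> assume p: "\<pi> \<in> X"
      have "finite (\<pi> ` U)" "\<pi> ` U \<noteq> {}" using fU aU by auto
      then have "Max (\<pi> ` U) \<in> \<pi> ` U" by (rule Max_in)
      then obtain b where b: "b \<in> U" "\<pi> b = Max (\<pi> ` U)" by auto
      have "\<forall>k\<in>U. \<pi> k \<le> \<pi> b" using b fU by simp
      then have "\<pi> \<in> C b" using p unfolding C_def by auto
      then show "\<pi> \<in> (\<Union>b\<in>U. C b)" using b by auto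
    qed
  qed (auto simp: C_def)
  have disj: "\<forall>b\<in>U. \<forall>c\<in>U. b \<noteq> c \<longrightarrow> C b \<inter> C c = {}"
  proof (intro ballI impI)
    fix b c assume bc: "b \<in> U" "c \<in> U" "b \<noteq> c"
    show "C b \<inter> C c = {}"
    proof (rule ccontr)
      assume "C b \<inter> C c \<noteq> {}"
      then obtain \<pi> where "\<pi> \<in> X" "\<forall>k\<in>U. \<pi> k \<le> \<pi> b" "\<forall>k\<in>U. \<pi> k \<le> \<pi> c"
        unfolding C_def by auto
      then have "\<pi> b = \<pi> c" "inj_on \<pi> U" using bc inj by (auto intro: antisym)
      then show False using bc by (auto dest: inj_onD)
    qed
  qed
  have fC: "\<forall>b\<in>U. finite (C b)" using fX by (auto simp: C_def)
  have eq: "card (C b) = card (C a)" if bU: "b \<in> U" for b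
  proof -
    let ?t = "Transposition.transpose a b"
    have tU: "?t k \<in> U" if "k \<in> U" for k using that aU bU by (auto simp: transpose_def)
    have "bij_betw (\<lambda>\<pi>. \<pi> \<circ> ?t) (C b) (C a)"
    proof (rule bij_betw_byWitness[where f' = "\<lambda>\<pi>. \<pi> \<circ> ?t"])
      show "\<forall>x\<in>C b. x \<circ> ?t \<circ> ?t = x" by (simp add: comp_assoc)
      show "\<forall>x\<in>C a. x \<circ> ?t \<circ> ?t = x" by (simp add: comp_assoc)
      show "(\<lambda>\<pi>. \<pi> \<circ> ?t) ` C b \<subseteq> C a"
        using clos tU bU unfolding C_def by auto
      have "Transposition.transpose a b = Transposition.transpose b a" by (rule transpose_commute[symmetric])
      show "(\<lambda>\<pi>. \<pi> \<circ> ?t) ` C a \<subseteq> C b"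
        using clos tU bU aU unfolding C_def by auto
    qed
    then show ?thesis by (rule bij_betw_same_card)
  qed
  have "card X = (\<Sum>b\<in>U. card (C b))"
    using cover card_UN_disjoint[OF fU fC disj] by simp
  also have "\<dots> = card U * card (C a)" using eq by simp
  finally show ?thesis unfolding C_def by simp
qed

lemma event_count:
  fixes m :: nat and U S :: "nat set"
  assumes UI: "U \<subseteq> {..<m}" and SU: "S \<subseteq> U" and iU: "i \<in> U" and iS: "i \<notin> S" and jS: "j \<in> S"
  shows "card {\<pi>. \<pi> permutes {..<m} \<and> (\<forall>k\<in>U. \<pi> k \<le> \<pi> i) \<and> (\<forall>k\<in>S. \<pi> k \<le> \<pi> j)} * card U * card S
         = card {\<pi>. \<pi> permutes {..<m}}"
proof -
  define X where "X = {\<pi>. \<pi> permutes {..<m}}"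
  define A where "A = {\<pi>\<in>X. \<forall>k\<in>U. \<pi> k \<le> \<pi> i}"
  have fX: "finite X" unfolding X_def by (rule finite_permutations) simp
  have fU: "finite U" using UI finite_subset by blast
  have fS: "finite S" using SU fU finite_subset by blast
  have injX: "inj_on \<pi> T" if "\<pi> \<in> X" for \<pi> T
    using that unfolding X_def by (auto intro: inj_on_subset[OF permutes_inj])
  have closX: "\<pi> \<circ> Transposition.transpose a b \<in> X" if "\<pi> \<in> X" "a \<in> U" "b \<in> U" for \<pi> a b
    using that UI unfolding X_def by (auto intro!: permutes_compose permutes_swap_id)
  have 1: "card A * card U = card X"
    unfolding A_def by (rule class_count[OF fX fU iU injX]) (auto intro: closX iU)
  have fA: "finite A" using fX unfolding A_def by simp
  have 2: "card {\<pi>\<in>A. \<forall>k\<in>S. \<pi> k \<le> \<pi> j} * card S = card A"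
  proof (rule class_count[OF fA fS jS])
    show "\<And>\<pi>. \<pi> \<in> A \<Longrightarrow> inj_on \<pi> S" using injX unfolding A_def by auto
    fix \<pi> b assume p: "\<pi> \<in> A" and b: "b \<in> S"
    let ?t = "Transposition.transpose j b"
    have pX: "\<pi> \<in> X" using p by (simp add: A_def)
    have "\<pi> \<circ> ?t \<in> X" by (rule closX[OF pX]) (use b jS SU in blast)+
    moreover have "?t k \<in> U" if "k \<in> U" for k using that b jS SU by (auto simp: transpose_def)
    moreover have "?t i = i" using iS b jS by (auto simp: transpose_def)
    moreover have "\<forall>k\<in>U. \<pi> k \<le> \<pi> i" using p by (simp add: A_def)
    ultimately show "\<pi> \<circ> ?t \<in> A" unfolding A_def by (simp add: o_def)
  qed
  have e: "{\<pi>. \<pi> permutes {..<m} \<and> (\<forall>k\<in>U. \<pi> k \<le> \<pi> i) \<and> (\<forall>k\<in>S. \<pi> k \<le> \<pi> j)} = {\<pi>\<in>A. \<forall>k\<in>S. \<pi> k \<le> \<pi> j}"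
    unfolding A_def X_def by blast
  have "card {\<pi>\<in>A. \<forall>k\<in>S. \<pi> k \<le> \<pi> j} * card U * card S = (card {\<pi>\<in>A. \<forall>k\<in>S. \<pi> k \<le> \<pi> j} * card S) * card U"
    by (simp only: mult_ac)
  also have "\<dots> = card X" using 1 2 by simp
  finally show ?thesis using e unfolding X_def by simp
qed



definition Lset :: "'a set list \<Rightarrow> 'a \<Rightarrow> nat set" where
  "Lset Fs w = {i. i < length Fs \<and> w \<in> Fs!i}"

definition hub :: "'a set set \<Rightarrow> nat \<Rightarrow> 'a set \<Rightarrow> 'a" where
  "hub E t C = (SOME h. h \<in> C \<and> (\<forall>v\<in>C. \<exists>p. is_walk C (induced_edges E C) p \<and> hd p = h \<and> last p = v \<and> length p \<le> t + 1))"

definition gwalk :: "'a set set \<Rightarrow> nat \<Rightarrow> 'a set list \<Rightarrow> nat \<Rightarrow> 'a list \<Rightarrow> 'a \<Rightarrow> bool" where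
  "gwalk E t Fs i p w \<longleftrightarrow> is_walk (Fs!i) (induced_edges E (Fs!i)) p \<and> hd p = hub E t (Fs!i) \<and> last p = w \<and> length p \<le> t + 1"

definition Bset :: "'a set set \<Rightarrow> nat \<Rightarrow> 'a set list \<Rightarrow> (nat \<Rightarrow> nat) \<Rightarrow> nat \<Rightarrow> 'a set" where
  "Bset E t Fs \<pi> i = {w. \<exists>p. gwalk E t Fs i p w \<and> (\<forall>k\<in>\<Union>(Lset Fs ` set p). \<pi> k \<le> \<pi> i)}"

definition VKs :: "'a set set \<Rightarrow> nat \<Rightarrow> 'a set list \<Rightarrow> (nat \<Rightarrow> nat) \<Rightarrow> nat set" where
  "VKs E t Fs \<pi> = {i. i < length Fs \<and> Bset E t Fs \<pi> i \<noteq> {}}"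

definition EKs :: "'a set set \<Rightarrow> nat \<Rightarrow> 'a set list \<Rightarrow> (nat \<Rightarrow> nat) \<Rightarrow> nat set set" where
  "EKs E t Fs \<pi> = {{i, j} | i j. i < length Fs \<and> j < length Fs \<and> i \<noteq> j \<and>
      (\<exists>u\<in>Bset E t Fs \<pi> i. \<exists>v\<in>Bset E t Fs \<pi> j. {u, v} \<in> E)}"

lemma walk_set: "is_walk A Ed p \<Longrightarrow> set p \<subseteq> A"
  by (simp add: is_walk_def)

lemma walk_take:
  assumes "is_walk A Ed p" "k < length p"
  shows "is_walk A Ed (take (Suc k) p) \<and> hd (take (Suc k) p) = hd p \<and> last (take (Suc k) p) = p ! k
         \<and> length (take (Suc k) p) \<le> length p \<and> set (take (Suc k) p) \<subseteq> set p"
proof -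
  have ne: "p \<noteq> []" using assms by (auto simp: is_walk_def)
  have "is_walk A Ed (take (Suc k) p)"
    using assms set_take_subset[of "Suc k" p] unfolding is_walk_def by auto
  moreover have "hd (take (Suc k) p) = hd p" using ne by (simp add: hd_take)
  moreover have "last (take (Suc k) p) = p ! k" using assms(2)
    by (simp add: take_Suc_conv_app_nth)
  ultimately show ?thesis by (simp add: set_take_subset)
qed

lemma walk_mono:
  assumes "is_walk C (induced_edges E C) p" "set p \<subseteq> B"
  shows "is_walk B (induced_edges E B) p"
proof -
  have "{p ! i, p ! Suc i} \<in> induced_edges E B" if "Suc i < length p" for i
  proof -
    have "{p ! i, p ! Suc i} \<in> E" using assms(1) that by (auto simp: is_walk_def induced_edges_def)
    moreover have "p ! i \<in> set p" "p ! Suc i \<in> set p" using that by simp_all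
    then have "p ! i \<in> B" "p ! Suc i \<in> B" using assms(2) by blast+
    ultimately show ?thesis by (simp add: induced_edges_def)
  qed
  then show ?thesis using assms by (auto simp: is_walk_def)
qed

context
  fixes V :: "'a set" and E :: "'a set set" and \<kappa> t :: nat and Fs :: "'a set list"
  assumes G: "graph V E" and P: "packing V E \<kappa> t Fs"
begin

lemma hub_prop:
  assumes "i < length Fs"
  shows "hub E t (Fs!i) \<in> Fs!i \<and> (\<forall>v\<in>Fs!i. \<exists>p. gwalk E t Fs i p v)"
proof -
  have "t_shallow (Fs!i) (induced_edges E (Fs!i)) t" using P assms by (auto simp: packing_def)
  then have "\<exists>h. h \<in> Fs!i \<and> (\<forall>v\<in>Fs!i. \<exists>p. is_walk (Fs!i) (induced_edges E (Fs!i)) p \<and> hd p = h \<and> last p = v \<and> length p \<le> t + 1)"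
    by (auto simp: t_shallow_def)
  then have "hub E t (Fs!i) \<in> Fs!i \<and> (\<forall>v\<in>Fs!i. \<exists>p. is_walk (Fs!i) (induced_edges E (Fs!i)) p \<and> hd p = hub E t (Fs!i) \<and> last p = v \<and> length p \<le> t + 1)"
    unfolding hub_def by (rule someI_ex)
  then show ?thesis by (simp add: gwalk_def)
qed

lemma Fs_sub: "i < length Fs \<Longrightarrow> Fs!i \<subseteq> V"
  using P by (auto simp: packing_def)

lemma Bset_sub: "Bset E t Fs \<pi> i \<subseteq> Fs!i"
  unfolding Bset_def gwalk_def is_walk_def by auto

lemma gwalk_last_in: "gwalk E t Fs i p w \<Longrightarrow> w \<in> set p"
  unfolding gwalk_def is_walk_def by auto

lemma Bset_disj:
  assumes inj: "inj_on \<pi> {..<length Fs}" and ij: "i < length Fs" "j < length Fs" "i \<noteq> j"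
  shows "Bset E t Fs \<pi> i \<inter> Bset E t Fs \<pi> j = {}"
proof (rule ccontr)
  assume "Bset E t Fs \<pi> i \<inter> Bset E t Fs \<pi> j \<noteq> {}"
  then obtain w where wi: "w \<in> Bset E t Fs \<pi> i" and wj: "w \<in> Bset E t Fs \<pi> j" by auto
  obtain p where p: "gwalk E t Fs i p w" "\<forall>k\<in>\<Union>(Lset Fs ` set p). \<pi> k \<le> \<pi> i"
    using wi unfolding Bset_def by auto
  obtain q where q: "gwalk E t Fs j q w" "\<forall>k\<in>\<Union>(Lset Fs ` set q). \<pi> k \<le> \<pi> j"
    using wj unfolding Bset_def by auto
  have "w \<in> Fs!i" "w \<in> Fs!j" using wi wj Bset_sub by auto
  then have "j \<in> Lset Fs w" "i \<in> Lset Fs w" using ij by (auto simp: Lset_def)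
  then have "\<pi> j \<le> \<pi> i" "\<pi> i \<le> \<pi> j" using p q gwalk_last_in by blast+
  then have "\<pi> i = \<pi> j" by simp
  then show False using inj ij by (auto dest: inj_onD)
qed

lemma Bset_shallow:
  assumes ne: "Bset E t Fs \<pi> i \<noteq> {}"
  shows "t_shallow (Bset E t Fs \<pi> i) (induced_edges E (Bset E t Fs \<pi> i)) t"
proof -
  let ?B = "Bset E t Fs \<pi> i"
  have key: "set p \<subseteq> ?B" if p: "gwalk E t Fs i p w" "\<forall>k\<in>\<Union>(Lset Fs ` set p). \<pi> k \<le> \<pi> i" for p w
  proof
    fix x assume "x \<in> set p"
    then obtain k where k: "k < length p" "x = p ! k" by (auto simp: in_set_conv_nth)
    have wt: "is_walk (Fs!i) (induced_edges E (Fs!i)) p" using p by (simp add: gwalk_def)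
    note T = walk_take[OF wt k(1)]
    have "gwalk E t Fs i (take (Suc k) p) x" using T p k by (auto simp: gwalk_def)
    moreover have "\<forall>k\<in>\<Union>(Lset Fs ` set (take (Suc k) p)). \<pi> k \<le> \<pi> i" using T p by blast
    ultimately show "x \<in> ?B" unfolding Bset_def by blast
  qed
  obtain w0 where "w0 \<in> ?B" using ne by auto
  then obtain p0 where p0: "gwalk E t Fs i p0 w0" "\<forall>k\<in>\<Union>(Lset Fs ` set p0). \<pi> k \<le> \<pi> i"
    unfolding Bset_def by auto
  have hubB: "hub E t (Fs!i) \<in> ?B"
  proof -
    have "p0 \<noteq> []" using p0 by (simp add: gwalk_def is_walk_def)
    then have "hd p0 \<in> set p0" by simp
    then show ?thesis using key[OF p0] p0 by (auto simp: gwalk_def)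
  qed
  have "\<forall>v\<in>?B. \<exists>p. is_walk ?B (induced_edges E ?B) p \<and> hd p = hub E t (Fs!i) \<and> last p = v \<and> length p \<le> t + 1"
  proof
    fix v assume "v \<in> ?B"
    then obtain p where p: "gwalk E t Fs i p v" "\<forall>k\<in>\<Union>(Lset Fs ` set p). \<pi> k \<le> \<pi> i"
      unfolding Bset_def by auto
    have "is_walk ?B (induced_edges E ?B) p"
      using walk_mono key[OF p] p by (auto simp: gwalk_def)
    then show "\<exists>p. is_walk ?B (induced_edges E ?B) p \<and> hd p = hub E t (Fs!i) \<and> last p = v \<and> length p \<le> t + 1"
      using p by (auto simp: gwalk_def)
  qed
  then show ?thesis using hubB unfolding t_shallow_def by blast
qed

lemma minor_ok:
  assumes "\<pi> permutes {..<length Fs}"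
  shows "shallow_minor V E t (VKs E t Fs \<pi>) (EKs E t Fs \<pi>)"
proof -
  have inj: "inj_on \<pi> {..<length Fs}" using assms by (auto intro: inj_on_subset[OF permutes_inj])
  have gr: "graph (VKs E t Fs \<pi>) (EKs E t Fs \<pi>)"
    unfolding graph_def
  proof
    show "finite (VKs E t Fs \<pi>)" unfolding VKs_def by simp
    show "\<forall>e\<in>EKs E t Fs \<pi>. \<exists>u v. e = {u, v} \<and> u \<noteq> v \<and> u \<in> VKs E t Fs \<pi> \<and> v \<in> VKs E t Fs \<pi>"
      unfolding EKs_def VKs_def by blast
  qed
  show ?thesis unfolding shallow_minor_def
  proof (intro conjI gr exI[where x = "Bset E t Fs \<pi>"] ballI impI)
    fix x assume x: "x \<in> VKs E t Fs \<pi>"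
    then show "Bset E t Fs \<pi> x \<subseteq> V" using Bset_sub[of \<pi> x] Fs_sub[of x] by (auto simp: VKs_def)
    show "t_shallow (Bset E t Fs \<pi> x) (induced_edges E (Bset E t Fs \<pi> x)) t"
      using x Bset_shallow by (auto simp: VKs_def)
  next
    fix x y assume "x \<in> VKs E t Fs \<pi>" "y \<in> VKs E t Fs \<pi>" "x \<noteq> y"
    then show "Bset E t Fs \<pi> x \<inter> Bset E t Fs \<pi> y = {}" using Bset_disj[OF inj] by (auto simp: VKs_def)
  next
    fix x y assume xy: "x \<in> VKs E t Fs \<pi>" "y \<in> VKs E t Fs \<pi>" "{x, y} \<in> EKs E t Fs \<pi>"
    then obtain i j where ij: "{x, y} = {i, j}" "i \<noteq> j" "\<exists>u\<in>Bset E t Fs \<pi> i. \<exists>v\<in>Bset E t Fs \<pi> j. {u, v} \<in> E"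
      unfolding EKs_def by blast
    then have "(x = i \<and> y = j) \<or> (x = j \<and> y = i)" by (auto simp: doubleton_eq_iff)
    then show "\<exists>u\<in>Bset E t Fs \<pi> x. \<exists>v\<in>Bset E t Fs \<pi> y. {u, v} \<in> E"
      using ij(3) by (metis insert_commute)
  qed
qed

end


lemma minor_card_le:
  assumes G: "graph V E" and M: "shallow_minor V E t VK EK"
  shows "card VK \<le> card V"
proof -
  obtain \<phi> :: "nat \<Rightarrow> _" where ph: "\<forall>x\<in>VK. \<phi> x \<subseteq> V \<and> t_shallow (\<phi> x) (induced_edges E (\<phi> x)) t"
    "\<forall>x\<in>VK. \<forall>y\<in>VK. x \<noteq> y \<longrightarrow> \<phi> x \<inter> \<phi> y = {}"
    using M unfolding shallow_minor_def by (elim conjE exE) (intro that)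
  have ne: "\<phi> x \<noteq> {}" if "x \<in> VK" for x using ph(1) that by (auto simp: t_shallow_def)
  define f where "f x = (SOME u. u \<in> \<phi> x)" for x
  have fin: "f x \<in> \<phi> x" if "x \<in> VK" for x using ne[OF that] unfolding f_def by (auto intro: someI_ex)
  have "inj_on f VK"
  proof (rule inj_onI)
    fix x y
    assume xy: "x \<in> VK" "y \<in> VK" "f x = f y"
    show "x = y"
    proof (rule ccontr)
      assume "x \<noteq> y"
      then have "\<phi> x \<inter> \<phi> y = {}" using ph(2) xy by blast
      moreover have "f x \<in> \<phi> x" "f x \<in> \<phi> y" using fin[of x] fin[of y] xy by simp_all
      ultimately show False by blast
    qed
  qed
  moreover have "f ` VK \<subseteq> V" using fin ph(1) by blast
  moreover have "finite V" using G by (simp add: graph_def)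
  ultimately show ?thesis by (rule card_inj_on_le)
qed

lemma graph_sub:
  assumes "graph VK EK" shows "EK \<subseteq> Pow VK"
proof
  fix e assume e: "e \<in> EK"
  obtain u v where "e = {u, v}" "u \<in> VK" "v \<in> VK" using assms e unfolding graph_def by meson
  then show "e \<in> Pow VK" by simp
qed

lemma minor_graph: "shallow_minor V E t VK EK \<Longrightarrow> graph VK EK"
  unfolding shallow_minor_def by (elim conjE)

lemma nabla_bdd:
  assumes G: "graph V E"
  shows "bdd_above {real (card EK) / real (card VK) | VK EK. shallow_minor V E t VK EK}"
proof (rule bdd_aboveI)
  fix r assume "r \<in> {real (card EK) / real (card VK) | VK EK. shallow_minor V E t VK EK}"
  then obtain VK EK where r: "r = real (card EK) / real (card VK)" and M: "shallow_minor V E t VK EK" by blast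
  have gK: "graph VK EK" using M by (rule minor_graph)
  have "EK \<subseteq> Pow VK" using gK by (rule graph_sub)
  moreover have "finite VK" using gK by (simp add: graph_def)
  ultimately have "card EK \<le> card (Pow VK)" by (intro card_mono) auto
  also have "\<dots> = 2 ^ card VK" using \<open>finite VK\<close> by (rule card_Pow)
  finally have "card EK \<le> 2 ^ card VK" .
  also have "\<dots> \<le> 2 ^ card V" using minor_card_le[OF G M] by (simp add: power_increasing)
  finally have "real (card EK) \<le> real ((2::nat) ^ card V)" by (simp only: of_nat_le_iff)
  moreover have "r \<le> real (card EK)"
  proof (cases "card VK = 0")
    case True then show ?thesis unfolding r by simp
  next
    case False
    then have "real (card VK) \<ge> 1" by simp
    then show ?thesis unfolding r by (simp add: divide_le_eq mult_le_cancel_left1)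
  qed
  ultimately show "r \<le> real ((2::nat) ^ card V)" by linarith
qed

lemma nabla_nonneg:
  assumes G: "graph V E"
  shows "0 \<le> nabla V E t"
proof -
  have "shallow_minor V E t {} {}" unfolding shallow_minor_def graph_def by simp
  then have "real (card ({}::nat set set)) / real (card ({}::nat set)) \<in> {real (card EK) / real (card VK) | VK EK. shallow_minor V E t VK EK}"
    by blast
  then have "0 \<le> Sup {real (card EK) / real (card VK) | VK EK. shallow_minor V E t VK EK}"
    using cSup_upper[OF _ nabla_bdd[OF G]] by fastforce
  then show ?thesis by (simp add: nabla_def)
qed

lemma minor_le:
  assumes G: "graph V E" and M: "shallow_minor V E t VK EK"
  shows "real (card EK) \<le> nabla V E t * real (card VK)"
proof (cases "card VK = 0")
  case True
  have gK: "graph VK EK" using M by (rule minor_graph)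
  then have "VK = {}" using True by (simp add: graph_def)
  then have "EK = {}" using gK unfolding graph_def by (metis empty_iff ex_in_conv)
  then show ?thesis using \<open>VK = {}\<close> by simp
next
  case False
  have "real (card EK) / real (card VK) \<in> {real (card EK) / real (card VK) | VK EK. shallow_minor V E t VK EK}"
    using M by blast
  then have "real (card EK) / real (card VK) \<le> nabla V E t"
    unfolding nabla_def by (rule cSup_upper[OF _ nabla_bdd[OF G]])
  then show ?thesis using False by (simp add: divide_le_eq)
qed

context
  fixes V :: "'a set" and E :: "'a set set" and \<kappa> t :: nat and Fs :: "'a set list"
  assumes G: "graph V E" and P: "packing V E \<kappa> t Fs"
begin

lemma Lset_card: "w \<in> V \<Longrightarrow> card (Lset Fs w) \<le> \<kappa>"
  using P unfolding packing_def Lset_def by (auto simp: length_filter_conv_card)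

lemma Lset_sub: "Lset Fs w \<subseteq> {..<length Fs}"
  by (auto simp: Lset_def)

lemma UL_card:
  assumes "gwalk E t Fs i p w" "i < length Fs"
  shows "card (\<Union>(Lset Fs ` set p)) \<le> (t + 1) * \<kappa>"
proof -
  have sp: "set p \<subseteq> V" using assms Fs_sub[OF G P] walk_set unfolding gwalk_def by blast
  have "card (\<Union>(Lset Fs ` set p)) \<le> (\<Sum>w\<in>set p. card (Lset Fs w))" by (rule card_UN_le) simp
  also have "\<dots> \<le> (\<Sum>w\<in>set p. \<kappa>)" using sp Lset_card by (intro sum_mono) blast
  also have "\<dots> = card (set p) * \<kappa>" by simp
  also have "\<dots> \<le> length p * \<kappa>" by (simp add: card_length)
  also have "\<dots> \<le> (t + 1) * \<kappa>" using assms unfolding gwalk_def by (intro mult_le_mono1) simp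
  finally show ?thesis .
qed

lemma witness:
  assumes ij: "i < length Fs" "j < length Fs" and h: "hub E t (Fs!j) \<notin> Fs!i"
    and adj: "Fs!i \<inter> Fs!j \<noteq> {} \<or> (\<exists>u\<in>Fs!i. \<exists>v\<in>Fs!j. {u, v} \<in> E)"
  shows "\<exists>u v q. u \<in> Fs!i \<and> {u, v} \<in> E \<and> gwalk E t Fs j q v \<and> set q \<inter> Fs!i = {}"
proof -
  define N where "N y \<longleftrightarrow> y \<in> Fs!i \<or> (\<exists>u\<in>Fs!i. {u, y} \<in> E)" for y
  obtain x where x: "x \<in> Fs!j" "N x" using adj unfolding N_def by blast
  obtain q0 where q0: "gwalk E t Fs j q0 x" using hub_prop[OF G P ij(2)] x by blast
  have ne: "q0 \<noteq> []" using q0 by (simp add: gwalk_def is_walk_def)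
  have ex: "\<exists>k. k < length q0 \<and> N (q0 ! k)"
    using q0 ne x by (intro exI[of _ "length q0 - 1"]) (auto simp: gwalk_def last_conv_nth)
  define k where "k = (LEAST k. k < length q0 \<and> N (q0 ! k))"
  have k: "k < length q0" "N (q0 ! k)" using LeastI_ex[OF ex] unfolding k_def by auto
  have before: "\<not> N (q0 ! l)" if "l < k" for l
    using not_less_Least[of l "\<lambda>k. k < length q0 \<and> N (q0 ! k)"] that k unfolding k_def by auto
  have notin: "q0 ! k \<notin> Fs!i"
  proof (cases k)
    case 0
    then show ?thesis using q0 h ne by (auto simp: gwalk_def hd_conv_nth)
  next
    case (Suc l)
    show ?thesis
    proof
      assume a: "q0 ! k \<in> Fs!i"
      have "{q0 ! l, q0 ! Suc l} \<in> E" using q0 k Suc by (auto simp: gwalk_def is_walk_def induced_edges_def)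
      then have "{q0 ! k, q0 ! l} \<in> E" using Suc by (simp add: insert_commute)
      then have "N (q0 ! l)" using a unfolding N_def by blast
      then show False using before Suc by simp
    qed
  qed
  then obtain u where u: "u \<in> Fs!i" "{u, q0 ! k} \<in> E" using k(2) unfolding N_def by blast
  have wt: "is_walk (Fs!j) (induced_edges E (Fs!j)) q0" using q0 by (simp add: gwalk_def)
  note T = walk_take[OF wt k(1)]
  have g: "gwalk E t Fs j (take (Suc k) q0) (q0 ! k)" using T q0 by (auto simp: gwalk_def)
  have "set (take (Suc k) q0) \<inter> Fs!i = {}"
  proof (rule ccontr)
    assume "set (take (Suc k) q0) \<inter> Fs!i \<noteq> {}"
    then obtain y where y: "y \<in> set (take (Suc k) q0)" "y \<in> Fs!i" by blast
    then obtain l where l: "l < length (take (Suc k) q0)" "y = take (Suc k) q0 ! l" by (auto simp: in_set_conv_nth)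
    then have l2: "l \<le> k" "y = q0 ! l" by auto
    show False
    proof (cases "l = k")
      case True then show False using notin y l2 by simp
    next
      case False then have "l < k" using l2 by simp
      then show False using before y l2 unfolding N_def by auto
    qed
  qed
  then show ?thesis using u g by blast
qed

lemma edge_count:
  assumes ij: "i < length Fs" "j < length Fs" and uv: "{u, v} \<in> E"
    and p: "gwalk E t Fs i p u" and q: "gwalk E t Fs j q v" and qi: "set q \<inter> Fs!i = {}"
  shows "card {\<pi>. \<pi> permutes {..<length Fs}} \<le>
     card {\<pi>\<in>{\<pi>. \<pi> permutes {..<length Fs}}. {i, j} \<in> EKs E t Fs \<pi>} * (2 * (t + 1) * \<kappa>) * ((t + 1) * \<kappa>)"
proof -
  define S where "S = \<Union>(Lset Fs ` set q)"
  define U where "U = \<Union>(Lset Fs ` set p) \<union> S"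
  have uC1: "u \<in> set p" using gwalk_last_in[OF G P p] .
  have uC: "u \<in> set p" "u \<in> Fs!i" using uC1 walk_set p unfolding gwalk_def by blast+
  have vC1: "v \<in> set q" using gwalk_last_in[OF G P q] .
  have vC: "v \<in> set q" "v \<in> Fs!j" using vC1 walk_set q unfolding gwalk_def by blast+
  have UI: "U \<subseteq> {..<length Fs}" unfolding U_def S_def using Lset_sub by blast
  have SU: "S \<subseteq> U" unfolding U_def by blast
  have iU: "i \<in> U" unfolding U_def using uC ij by (auto simp: Lset_def)
  have iS: "i \<notin> S" unfolding S_def using qi by (auto simp: Lset_def)
  have jS: "j \<in> S" unfolding S_def using vC ij by (auto simp: Lset_def)
  have neq: "i \<noteq> j" using iS jS by auto
  define Ev where "Ev = {\<pi>. \<pi> permutes {..<length Fs} \<and> (\<forall>k\<in>U. \<pi> k \<le> \<pi> i) \<and> (\<forall>k\<in>S. \<pi> k \<le> \<pi> j)}"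
  have cnt: "card Ev * card U * card S = card {\<pi>. \<pi> permutes {..<length Fs}}"
    unfolding Ev_def by (rule event_count[OF UI SU iU iS jS])
  have sub: "Ev \<subseteq> {\<pi>\<in>{\<pi>. \<pi> permutes {..<length Fs}}. {i, j} \<in> EKs E t Fs \<pi>}"
  proof
    fix \<pi> assume e: "\<pi> \<in> Ev"
    have "u \<in> Bset E t Fs \<pi> i" using e p unfolding Ev_def Bset_def U_def by blast
    moreover have "v \<in> Bset E t Fs \<pi> j" using e q unfolding Ev_def Bset_def S_def U_def by blast
    ultimately have "{i, j} \<in> EKs E t Fs \<pi>" unfolding EKs_def using ij neq uv by blast
    then show "\<pi> \<in> {\<pi>\<in>{\<pi>. \<pi> permutes {..<length Fs}}. {i, j} \<in> EKs E t Fs \<pi>}" using e by (simp add: Ev_def)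
  qed
  have fin: "finite {\<pi>\<in>{\<pi>. \<pi> permutes {..<length Fs}}. {i, j} \<in> EKs E t Fs \<pi>}"
    using finite_permutations[of "{..<length Fs}"] by simp
  have c1: "card Ev \<le> card {\<pi>\<in>{\<pi>. \<pi> permutes {..<length Fs}}. {i, j} \<in> EKs E t Fs \<pi>}"
    by (rule card_mono[OF fin sub])
  have cS: "card S \<le> (t + 1) * \<kappa>" unfolding S_def by (rule UL_card[OF q ij(2)])
  have cU: "card U \<le> 2 * (t + 1) * \<kappa>"
  proof -
    have "card U \<le> card (\<Union>(Lset Fs ` set p)) + card S" unfolding U_def by (rule card_Un_le)
    also have "\<dots> \<le> (t + 1) * \<kappa> + (t + 1) * \<kappa>" using cS UL_card[OF p ij(1)] by simp
    finally show ?thesis by simp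
  qed
  have "card Ev * card U * card S \<le> card {\<pi>\<in>{\<pi>. \<pi> permutes {..<length Fs}}. {i, j} \<in> EKs E t Fs \<pi>} * (2 * (t + 1) * \<kappa>) * ((t + 1) * \<kappa>)"
    using c1 cU cS by (intro mult_le_mono) auto
  then show ?thesis using cnt by simp
qed

end


lemma card_filter_sum: "finite S \<Longrightarrow> card {x\<in>S. Q x} = (\<Sum>x\<in>S. if Q x then 1 else 0)"
  by (simp add: sum.inter_filter[symmetric])

lemma sum_card_swap:
  assumes "finite A" "finite X"
  shows "(\<Sum>e\<in>A. card {\<pi>\<in>X. P e \<pi>}) = (\<Sum>\<pi>\<in>X. card {e\<in>A. P e \<pi>})"
proof -
  have "(\<Sum>e\<in>A. card {\<pi>\<in>X. P e \<pi>}) = (\<Sum>e\<in>A. \<Sum>\<pi>\<in>X. if P e \<pi> then 1 else 0)"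
    using card_filter_sum[OF assms(2)] by simp
  also have "\<dots> = (\<Sum>\<pi>\<in>X. \<Sum>e\<in>A. if P e \<pi> then 1 else 0)" by (rule sum.swap)
  also have "\<dots> = (\<Sum>\<pi>\<in>X. card {e\<in>A. P e \<pi>})" using card_filter_sum[OF assms(1)] by simp
  finally show ?thesis .
qed

theorem mainTheorem6:
  fixes V :: "'a set" and E :: "'a set set" and \<kappa> t :: nat and Fs :: "'a set list"
  assumes "graph V E"
    and "packing V E \<kappa> t Fs"
  shows "real (card (packing_graph_edges E Fs)) / real (card (packing_graph_vertices Fs))
           \<le> 2 * (real t + 1)^2 * (real \<kappa>)^2 * nabla V E t + real \<kappa>"
proof -
  note G = assms(1) and P = assms(2)
  define m where "m = length Fs"
  define X where "X = {\<pi>. \<pi> permutes {..<m}}"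
  define PE where "PE = packing_graph_edges E Fs"
  define K where "K = (2 * (t + 1) * \<kappa>) * ((t + 1) * \<kappa>)"
  define good where "good e \<longleftrightarrow> (\<exists>i j. e = {i, j} \<and> i < m \<and> j < m \<and> i \<noteq> j \<and> hub E t (Fs!j) \<notin> Fs!i \<and>
      (Fs!i \<inter> Fs!j \<noteq> {} \<or> (\<exists>u\<in>Fs!i. \<exists>v\<in>Fs!j. {u, v} \<in> E)))" for e
  define Good where "Good = {e\<in>PE. good e}"
  define Bad where "Bad = PE - Good"
  have nn: "0 \<le> nabla V E t" by (rule nabla_nonneg[OF G])
  have fX: "finite X" unfolding X_def by (rule finite_permutations) simp
  have X0: "card X > 0" using fX unfolding X_def by (auto simp: card_gt_0_iff intro!: exI[of _ id])
  have PEsub: "PE \<subseteq> Pow {..<m}" unfolding PE_def packing_graph_edges_def m_def by auto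
  have fPE: "finite PE" using PEsub finite_subset by blast
  have fGood: "finite Good" using fPE unfolding Good_def by simp
  have cPE: "card PE = card Good + card Bad"
  proof -
    have GP: "Good \<subseteq> PE" unfolding Good_def by blast
    have "card Bad = card PE - card Good" unfolding Bad_def by (rule card_Diff_subset[OF fGood GP])
    moreover have "card Good \<le> card PE" by (rule card_mono[OF fPE GP])
    ultimately show ?thesis by simp
  qed
  have badsub: "Bad \<subseteq> (\<lambda>(j, i). {i, j}) ` (SIGMA j:{..<m}. Lset Fs (hub E t (Fs!j)))"
  proof
    fix e assume e: "e \<in> Bad"
    then have ePE: "e \<in> PE" and ng: "\<not> good e" unfolding Bad_def Good_def by auto
    obtain i j where ij: "e = {i, j}" "i < m" "j < m" "i \<noteq> j"
      "Fs!i \<inter> Fs!j \<noteq> {} \<or> (\<exists>u\<in>Fs!i. \<exists>v\<in>Fs!j. {u, v} \<in> E)"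
      using ePE unfolding PE_def packing_graph_edges_def m_def by blast
    have "hub E t (Fs!j) \<in> Fs!i"
    proof (rule ccontr)
      assume "hub E t (Fs!j) \<notin> Fs!i"
      then have "good e" unfolding good_def using ij by (intro exI[of _ i] exI[of _ j]) simp
      then show False using ng by simp
    qed
    then have "i \<in> Lset Fs (hub E t (Fs!j))" using ij by (simp add: Lset_def m_def)
    then have "(j, i) \<in> (SIGMA j:{..<m}. Lset Fs (hub E t (Fs!j)))" using ij by simp
    then show "e \<in> (\<lambda>(j, i). {i, j}) ` (SIGMA j:{..<m}. Lset Fs (hub E t (Fs!j)))"
      using ij(1) by (auto intro!: image_eqI[of _ _ "(j, i)"])
  qed
  have fL: "finite (Lset Fs w)" for w unfolding Lset_def by simp
  have "card Bad \<le> card (SIGMA j:{..<m}. Lset Fs (hub E t (Fs!j)))"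
  proof -
    have fS: "finite (SIGMA j:{..<m}. Lset Fs (hub E t (Fs!j)))" using fL by simp
    have "card Bad \<le> card ((\<lambda>(j, i). {i, j}) ` (SIGMA j:{..<m}. Lset Fs (hub E t (Fs!j))))"
      by (rule card_mono[OF finite_imageI[OF fS] badsub])
    also have "\<dots> \<le> card (SIGMA j:{..<m}. Lset Fs (hub E t (Fs!j)))" by (rule card_image_le[OF fS])
    finally show ?thesis .
  qed
  also have "\<dots> = (\<Sum>j<m. card (Lset Fs (hub E t (Fs!j))))" by (simp add: card_SigmaI fL)
  also have "\<dots> \<le> (\<Sum>j<m. \<kappa>)"
  proof (rule sum_mono)
    fix j assume "j \<in> {..<m}"
    then have "hub E t (Fs!j) \<in> V" using hub_prop[OF G P] Fs_sub[OF G P] by (auto simp: m_def)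
    then show "card (Lset Fs (hub E t (Fs!j))) \<le> \<kappa>" by (rule Lset_card[OF G P])
  qed
  finally have cBad: "card Bad \<le> m * \<kappa>" by simp
  have per: "card X \<le> card {\<pi>\<in>X. e \<in> EKs E t Fs \<pi>} * K" if e: "e \<in> Good" for e
  proof -
    obtain i j where ij: "e = {i, j}" "i < m" "j < m" "i \<noteq> j" "hub E t (Fs!j) \<notin> Fs!i"
      "Fs!i \<inter> Fs!j \<noteq> {} \<or> (\<exists>u\<in>Fs!i. \<exists>v\<in>Fs!j. {u, v} \<in> E)"
      using e unfolding Good_def good_def by blast
    obtain u v q where w: "u \<in> Fs!i" "{u, v} \<in> E" "gwalk E t Fs j q v" "set q \<inter> Fs!i = {}"
      using witness[OF G P, of i j] ij by (auto simp: m_def)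
    obtain p where p: "gwalk E t Fs i p u" using hub_prop[OF G P, of i] ij w by (auto simp: m_def)
    have "card X \<le> card {\<pi>\<in>X. {i, j} \<in> EKs E t Fs \<pi>} * (2 * (t + 1) * \<kappa>) * ((t + 1) * \<kappa>)"
      using edge_count[OF G P _ _ w(2) p w(3) w(4)] ij unfolding X_def m_def by simp
    then show ?thesis using ij(1) unfolding K_def by (simp add: mult.assoc)
  qed
  have fEK: "finite (EKs E t Fs \<pi>)" for \<pi>
  proof -
    have "EKs E t Fs \<pi> \<subseteq> Pow {..<m}" unfolding EKs_def m_def by auto
    then show ?thesis using finite_subset by blast
  qed
  have minle: "real (card (EKs E t Fs \<pi>)) \<le> nabla V E t * real m" if "\<pi> \<in> X" for \<pi>
  proof -
    have "real (card (EKs E t Fs \<pi>)) \<le> nabla V E t * real (card (VKs E t Fs \<pi>))"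
      using minor_le[OF G minor_ok[OF G P]] that unfolding X_def m_def by blast
    also have "\<dots> \<le> nabla V E t * real m"
    proof -
      have "VKs E t Fs \<pi> \<subseteq> {..<m}" unfolding VKs_def m_def by auto
      then have "card (VKs E t Fs \<pi>) \<le> m" by (metis card_lessThan card_mono finite_lessThan)
      then show ?thesis using nn by (simp add: mult_left_mono)
    qed
    finally show ?thesis .
  qed
  have "card Good * card X = (\<Sum>e\<in>Good. card X)" by simp
  also have "\<dots> \<le> (\<Sum>e\<in>Good. card {\<pi>\<in>X. e \<in> EKs E t Fs \<pi>} * K)" by (rule sum_mono) (rule per)
  also have "\<dots> = K * (\<Sum>e\<in>Good. card {\<pi>\<in>X. e \<in> EKs E t Fs \<pi>})" by (simp add: sum_distrib_left mult.commute)
  also have "(\<Sum>e\<in>Good. card {\<pi>\<in>X. e \<in> EKs E t Fs \<pi>}) = (\<Sum>\<pi>\<in>X. card {e\<in>Good. e \<in> EKs E t Fs \<pi>})"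
    by (rule sum_card_swap[OF fGood fX])
  also have "\<dots> \<le> (\<Sum>\<pi>\<in>X. card (EKs E t Fs \<pi>))" by (rule sum_mono) (rule card_mono[OF fEK], blast)
  finally have A: "card Good * card X \<le> K * (\<Sum>\<pi>\<in>X. card (EKs E t Fs \<pi>))" by simp
  have "real (card Good) * real (card X) \<le> real K * (\<Sum>\<pi>\<in>X. real (card (EKs E t Fs \<pi>)))"
  proof -
    have "real (card Good * card X) \<le> real (K * (\<Sum>\<pi>\<in>X. card (EKs E t Fs \<pi>)))" using A by (simp only: of_nat_le_iff)
    then show ?thesis by (simp add: of_nat_sum)
  qed
  also have "\<dots> \<le> real K * (\<Sum>\<pi>\<in>X. nabla V E t * real m)"
    by (intro mult_left_mono sum_mono minle) auto
  also have "\<dots> = (real K * nabla V E t * real m) * real (card X)" by simp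
  finally have "real (card Good) \<le> real K * nabla V E t * real m"
    using X0 by (simp add: mult_le_cancel_right)
  then have tot: "real (card PE) \<le> (real K * nabla V E t + real \<kappa>) * real m"
  proof -
    have "real (card PE) = real (card Good) + real (card Bad)" using cPE by simp
    moreover have "real (card Bad) \<le> real m * real \<kappa>" using cBad by (metis of_nat_le_iff of_nat_mult)
    ultimately show ?thesis using \<open>real (card Good) \<le> real K * nabla V E t * real m\<close> by (simp add: algebra_simps)
  qed
  have RK: "real K = 2 * (real t + 1)^2 * (real \<kappa>)^2" unfolding K_def by (simp add: power2_eq_square algebra_simps)
  have cV: "card (packing_graph_vertices Fs) = m" by (simp add: packing_graph_vertices_def m_def)
  show ?thesis
  proof (cases "m = 0")
    case True
    then show ?thesis using cV nn by simp
  next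
    case False
    then show ?thesis using tot cV RK unfolding PE_def by (simp add: divide_le_eq mult.commute)
  qed
qed

end
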